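(* In the setting below, for every $1\le k\le n$ and every $1\le t\le mn+1$, almost surely $$b(k,t)\le c(k,t)\quad\text{or}\quad \sum_{i=1}^{mn}y_i>Y.$$
   Context: Setting: $m,n$ are positive integers with $n\ge 1200\sqrt m$. A deck of $mn$ cards with $m$ copies of each label $1,\dots,n$ is shuffled uniformly at random. A fixed guessing strategy is used: in round $t=1,\dots,mn$ the Guesser guesses $g_t\in\{1,\dots,n\}$, a function (possibly randomized independently of the deck) of $y_1,\dots,y_{t-1}$, where $y_t\in\{0,1\}$ is the indicator that the $t$-th card has label $g_t$. For a vector $v$, $v_{\le t}:=(v_1,\dots,v_t)$. For $1\le k\le n$, $1\le t\le mn+1$: $a(k,t):=|\{1\le i<t: g_i=k\}|$ and $b(k,t):=|\{1\le i<t: g_i=k,\ y_i=1\}|$ (so $b(k,t)\le m$). It is known that, whenever $a(g_t,t)<mn-\sum_{i=1}^{t-1}y_i$, $$\mathbb{E}(y_t\mid g_{\le t},y_{\le t-1})\le \frac{m-b(g_t,t)}{mn-a(g_t,t)-\sum_{i=1}^{t-1}y_i}.$$ Let $Y:=\lfloor \tfrac16\sqrt m\, n\rfloor$. Let $(z_1,\dots,z_{mn})\in\{0,1\}^{mn}$ be a random vector (on an extension of the probability space), with $c(k,t):=|\{1\le i<t: g_i=k,\ z_i=1\}|$, satisfying almost surely: (a) for all $k,t$: $m-\max\{mn-a(k,t)-Y,0\}\le c(k,t)\le m$; (b) for each $t$, conditioned on $g_{\le t},y_{\le t}$, the coordinates of $z_{\le t}$ are mutually independent and independent from $g_{\le mn},y_{\le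 mn}$; (c) for each $t$, if $a(g_t,t)<mn-Y$ then $\mathbb{E}(z_t\mid g_{\le t},z_{\le t-1})=\frac{m-c(g_t,t)}{mn-a(g_t,t)-Y}$; (d) for each $t$, if $\mathbb{E}(y_t\mid g_{\le t},y_{\le t-1})\le\mathbb{E}(z_t\mid g_{\le t},z_{\le t-1})$ then $y_t\le z_t$. (Such a vector exists.) *)

theory Defs
  imports "HOL-Probability.Probability" "HOL-Library.Multiset"
begin

text \<open>Arrangements of a deck of m*n cards with m copies of each label 1..n
  (the t-th card, t = 1..m*n, is the list entry at index t - 1).\<close>
definition decks :: "nat \<Rightarrow> nat \<Rightarrow> nat list set" where
  "decks m n = {xs. length xs = m * n \<and> (\<forall>k\<in>{1..n}. count (mset xs) k = m)}"

definition cnt_guess :: "(nat \<Rightarrow> nat) \<Rightarrow> nat \<Rightarrow> nat \<Rightarrow> nat" where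
  "cnt_guess gs k t = card {i. 1 \<le> i \<and> i < t \<and> gs i = k}"

definition cnt_hit :: "(nat \<Rightarrow> nat) \<Rightarrow> (nat \<Rightarrow> nat) \<Rightarrow> nat \<Rightarrow> nat \<Rightarrow> nat" where
  "cnt_hit gs ys k t = card {i. 1 \<le> i \<and> i < t \<and> gs i = k \<and> ys i = 1}"

definition Ybound :: "nat \<Rightarrow> nat \<Rightarrow> nat" where
  "Ybound m n = nat \<lfloor>sqrt (real m) * real n / 6\<rfloor>"

text \<open>Sigma algebra generated by (g_1..g_t, w_1..w_{t-1}) (the history used in the
  conditional expectations E(w_t | g_{\<le>t}, w_{\<le>t-1})).\<close>
definition hist :: "'a measure \<Rightarrow> ('a \<Rightarrow> nat \<Rightarrow> nat) \<Rightarrow> ('a \<Rightarrow> nat \<Rightarrow> nat) \<Rightarrow> nat \<Rightarrow> 'a measure" where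
  "hist M g w t = vimage_algebra (space M)
      (\<lambda>\<omega>. (map (g \<omega>) [1..<t+1], map (w \<omega>) [1..<t])) (count_space UNIV)"

text \<open>Condition (b), for a fixed t, for discrete random variables:
  conditioned on V = (g_{\<le>t}, y_{\<le>t}), the variables z_1, ..., z_t and
  W = (g_{\<le>N}, y_{\<le>N}) (N = m n) are mutually independent.  Written in
  cross-multiplied form P(V=v, Z=ws, W=u) P(V=v)^t = (prod_i P(V=v, z_i = ws_i)) P(V=v, W=u),
  which for discrete variables is exactly conditional mutual independence
  (and is trivially true on null events V = v).\<close>
definition cond_indep_z ::
  "'a measure \<Rightarrow> nat \<Rightarrow> ('a \<Rightarrow> nat \<Rightarrow> nat) \<Rightarrow> ('a \<Rightarrow> nat \<Rightarrow> nat) \<Rightarrow> ('a \<Rightarrow> nat \<Rightarrow> nat) \<Rightarrow> nat \<Rightarrow> bool" where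
  "cond_indep_z M N g y z t \<longleftrightarrow>
    (let V = (\<lambda>\<omega>. (map (g \<omega>) [1..<t+1], map (y \<omega>) [1..<t+1]));
         W = (\<lambda>\<omega>. (map (g \<omega>) [1..<N+1], map (y \<omega>) [1..<N+1]))
     in \<forall>v u ws. length ws = t \<longrightarrow>
        measure M {\<omega>\<in>space M. V \<omega> = v \<and> map (z \<omega>) [1..<t+1] = ws \<and> W \<omega> = u}
          * measure M {\<omega>\<in>space M. V \<omega> = v} ^ t
        = (\<Prod>i<t. measure M {\<omega>\<in>space M. V \<omega> = v \<and> z \<omega> (i+1) = ws ! i})
          * measure M {\<omega>\<in>space M. V \<omega> = v \<and> W \<omega> = u})"

end

theory Submission
  imports Defs
begin

lemma decks_subset: "xs \<in> decks m n \<Longrightarrow> set xs \<subseteq> {1..n}"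
proof
  fix x assume xs: "xs \<in> decks m n" and x: "x \<in> set xs"
  show "x \<in> {1..n}"
  proof (rule ccontr)
    assume nx: "x \<notin> {1..n}"
    have "sum (count_list xs) ({1..n} \<union> set xs) = length xs"
      by (rule sum_count_set) auto
    also have "length xs = m * n" using xs by (simp add: decks_def)
    finally have e: "sum (count_list xs) ({1..n} \<union> set xs) = m*n" .
    have "sum (count_list xs) ({1..n} \<union> set xs) \<ge> sum (count_list xs) (insert x {1..n})"
      by (rule sum_mono2) (use x in auto)
    also have "sum (count_list xs) (insert x {1..n}) = count_list xs x + sum (count_list xs) {1..n}"
      using nx by simp
    also have "sum (count_list xs) {1..n} = m*n"
      using xs by (simp add: decks_def count_mset)
    finally show False using e x
      by (metis add_le_same_cancel2 count_list_0_iff le_zero_eq)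
  qed
qed

lemma decks_finite: "finite (decks m n)"
  by (rule finite_subset[OF _ finite_lists_length_eq[of "{1..n}" "m*n"]])
     (use decks_subset in \<open>auto simp: decks_def\<close>)

lemma decks_nonempty: "decks m n \<noteq> {}"
proof -
  define w where "w n = concat (map (\<lambda>k. replicate m k) [1..<Suc n])" for n
  have cr: "count_list (replicate m x) x = m" for x by (induction m) auto
  have c: "count_list (w n) x = (if x \<in> {1..n} then m else 0)" for n x
  proof (induction n)
    case (Suc n)
    show ?case
    proof (cases "x = Suc n")
      case True thus ?thesis using Suc by (simp add: w_def cr)
    next
      case False thus ?thesis using Suc by (auto simp: w_def)
    qed
  qed (simp add: w_def)
  have l: "length (w n) = m * n" for n
    by (induction n) (auto simp: w_def)
  have "w n \<in> decks m n" using c l by (simp add: decks_def count_mset)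
  thus ?thesis by auto
qed

lemma cnt_hit_Suc:
  assumes "1 \<le> t"
  shows "cnt_hit gs ys k (Suc t) = cnt_hit gs ys k t + (if gs t = k \<and> ys t = 1 then 1 else 0)"
proof (cases "gs t = k \<and> ys t = 1")
  case True
  have "{i. 1 \<le> i \<and> i < Suc t \<and> gs i = k \<and> ys i = 1} = insert t {i. 1 \<le> i \<and> i < t \<and> gs i = k \<and> ys i = 1}"
    using True assms by auto
  moreover have "finite {i. 1 \<le> i \<and> i < t \<and> gs i = k \<and> ys i = 1}" by (rule finite_subset[of _ "{..<t}"]) auto
  ultimately show ?thesis using True by (simp add: cnt_hit_def)
next
  case False
  have "{i. 1 \<le> i \<and> i < Suc t \<and> gs i = k \<and> ys i = 1} = {i. 1 \<le> i \<and> i < t \<and> gs i = k \<and> ys i = 1}"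
    using False assms by (auto simp: less_Suc_eq)
  thus ?thesis using False by (simp add: cnt_hit_def)
qed

lemma cnt_guess_mono: "s \<le> t \<Longrightarrow> cnt_guess gs k s \<le> cnt_guess gs k t"
  unfolding cnt_guess_def by (rule card_mono) (rule finite_subset[of _ "{..<t}"], auto)

lemma cnt_hit_count:
  assumes "length d = N" "\<forall>s\<in>{1..N}. ys s = (if d!(s-1) = gs s then 1 else 0)" "t \<le> N+1"
  shows "cnt_hit gs ys k t \<le> count (mset d) k"
proof -
  let ?A = "{i. 1 \<le> i \<and> i < t \<and> gs i = k \<and> ys i = 1}"
  let ?B = "{j. j < length d \<and> d!j = k}"
  have "(\<lambda>i. i - 1) ` ?A \<subseteq> ?B"
  proof
    fix j assume "j \<in> (\<lambda>i. i - 1) ` ?A"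
    then obtain i where i: "i \<in> ?A" "j = i - 1" by auto
    have y1: "ys i = 1" and "gs i = k" "i \<le> N" using i assms(3) by auto
    have y2: "ys i = (if d!(i-1) = gs i then 1 else 0)" by (rule bspec[OF assms(2)]) (use i(1) \<open>i \<le> N\<close> in auto)
    have "d!(i-1) = gs i"
    proof (rule ccontr)
      assume "d!(i-1) \<noteq> gs i"
      hence "ys i = 0" using y2 by simp
      thus False using y1 by simp
    qed
    hence "d!(i-1) = k" using \<open>gs i = k\<close> by simp
    thus "j \<in> ?B" using i \<open>i \<le> N\<close> assms(1) by auto
  qed
  moreover have "inj_on (\<lambda>i. i - 1) ?A" by (auto simp: inj_on_def)
  ultimately have "card ?A \<le> card ?B"
  proof -
    assume s: "(\<lambda>i. i - 1) ` ?A \<subseteq> ?B" and inj: "inj_on (\<lambda>i. i - 1) ?A"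
    have "card ?A = card ((\<lambda>i. i - 1) ` ?A)" using card_image[OF inj] by simp
    also have "\<dots> \<le> card ?B" by (rule card_mono[OF _ s]) simp
    finally show ?thesis .
  qed
  also have "card ?B = count (mset d) k"
  proof -
    have "?B = {j. j < length d \<and> k = d!j}" by auto
    thus ?thesis by (simp add: count_mset count_list_eq_length_filter length_filter_conv_card)
  qed
  finally show ?thesis by (simp add: cnt_hit_def)
qed

lemma main_pw:
  fixes gs ys zs :: "nat \<Rightarrow> nat" and d :: "nat list" and Ey Ez :: "nat \<Rightarrow> real"
    and m n N Y :: nat
  assumes ydef: "\<forall>s\<in>{1..N}. ys s = (if d!(s-1) = gs s then 1 else 0)"
    and dlen: "length d = N" and dcount: "\<forall>k\<in>{1..n}. count (mset d) k = m"
    and za: "\<forall>k'\<in>{1..n}. \<forall>s\<in>{1..N+1}.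
         real m - max (real N - real (cnt_guess gs k' s) - real Y) 0
           \<le> real (cnt_hit gs zs k' s) \<and> cnt_hit gs zs k' s \<le> m"
    and known: "\<forall>s\<in>{1..N}. real (cnt_guess gs (gs s) s) < real N - real (\<Sum>i=1..<s. ys i) \<longrightarrow>
         Ey s \<le> (real m - real (cnt_hit gs ys (gs s) s))
             / (real N - real (cnt_guess gs (gs s) s) - real (\<Sum>i=1..<s. ys i))"
    and zc: "\<forall>s\<in>{1..N}. real (cnt_guess gs (gs s) s) < real N - real Y \<longrightarrow>
         Ez s = (real m - real (cnt_hit gs zs (gs s) s))
             / (real N - real (cnt_guess gs (gs s) s) - real Y)"
    and zd: "\<forall>s\<in>{1..N}. Ey s \<le> Ez s \<longrightarrow> ys s \<le> zs s"
    and z01: "\<forall>s. zs s \<le> 1"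
    and sumY: "(\<Sum>i=1..N. ys i) \<le> Y"
  shows "t \<le> N \<Longrightarrow> \<forall>k\<in>{1..n}. cnt_hit gs ys k (Suc t) \<le> cnt_hit gs zs k (Suc t)"
proof (induction t)
  case 0
  have e: "{i::nat. 1 \<le> i \<and> i < Suc 0 \<and> Q i} = {}" for Q by auto
  show ?case unfolding cnt_hit_def e by simp
next
  case (Suc t)
  define s where "s = Suc t"
  have s1: "1 \<le> s" and sN: "s \<le> N" using Suc.prems by (auto simp: s_def)
  have IH: "\<forall>k\<in>{1..n}. cnt_hit gs ys k s \<le> cnt_hit gs zs k s" using Suc s_def by simp
  show ?case unfolding s_def[symmetric]
  proof
    fix k assume k: "k \<in> {1..n}"
    have hy: "cnt_hit gs ys k (Suc s) = cnt_hit gs ys k s + (if gs s = k \<and> ys s = 1 then 1 else 0)"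
      by (rule cnt_hit_Suc[OF s1])
    have hz: "cnt_hit gs zs k (Suc s) = cnt_hit gs zs k s + (if gs s = k \<and> zs s = 1 then 1 else 0)"
      by (rule cnt_hit_Suc[OF s1])
    have ih: "cnt_hit gs ys k s \<le> cnt_hit gs zs k s" using IH k by blast
    show "cnt_hit gs ys k (Suc s) \<le> cnt_hit gs zs k (Suc s)"
    proof (cases "gs s = k \<and> ys s = 1")
      case False thus ?thesis using hy hz ih by auto
    next
      case True
      hence gk: "gs s = k" and y1: "ys s = 1" by auto
      let ?a = "cnt_guess gs k s"
      let ?b = "cnt_hit gs ys k s"
      let ?c = "cnt_hit gs zs k s"
      let ?S = "\<Sum>i=1..<s. ys i"
      have SY: "?S \<le> Y"
      proof -
        have "?S \<le> (\<Sum>i=1..N. ys i)" by (rule sum_mono2) (use sN in auto)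
        thus ?thesis using sumY by simp
      qed
      have zaS: "real m - max (real N - real (cnt_guess gs k (Suc s)) - real Y) 0
           \<le> real (cnt_hit gs zs k (Suc s))" using za k sN by auto
      have zas: "real m - max (real N - real ?a - real Y) 0 \<le> real ?c \<and> ?c \<le> m"
        using za k sN s1 by auto
      show ?thesis
      proof (cases "real ?a < real N - real Y")
        case False
        hence "real N - real (cnt_guess gs k (Suc s)) - real Y \<le> 0"
          using cnt_guess_mono[of s "Suc s" gs k] by simp
        hence "m \<le> cnt_hit gs zs k (Suc s)" using zaS by simp
        moreover have "cnt_hit gs ys k (Suc s) \<le> m"
          using cnt_hit_count[OF dlen ydef, of "Suc s" k] sN dcount k by simp
        ultimately show ?thesis by simp
      next
        case True
        show ?thesis
        proof (cases "?b < ?c")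
          case True thus ?thesis using hy hz by simp
        next
          case False
          hence bc: "?b = ?c" using ih by simp
          have cm: "?c \<le> m" using zas by simp
          have kn: "real (cnt_guess gs (gs s) s) < real N - real ?S"
          proof -
            have RS: "real ?S \<le> real Y" using SY by (simp only: of_nat_le_iff)
            show ?thesis unfolding gk using True RS by linarith
          qed
          have Ey: "Ey s \<le> (real m - real ?b) / (real N - real ?a - real ?S)"
            using known s1 sN kn gk by auto
          have Ez: "Ez s = (real m - real ?c) / (real N - real ?a - real Y)"
            using zc s1 sN True gk by auto
          have "(real m - real ?b) / (real N - real ?a - real ?S)
                \<le> (real m - real ?c) / (real N - real ?a - real Y)"
          proof -
            have RS: "real ?S \<le> real Y" using SY by (simp only: of_nat_le_iff)
            have p: "0 < real N - real ?a - real Y" using True by linarith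
            have p2: "real N - real ?a - real Y \<le> real N - real ?a - real ?S" using RS by linarith
            have p3: "0 < real N - real ?a - real ?S" using p p2 by linarith
            have p4: "0 \<le> real m - real ?c" using cm by simp
            show ?thesis unfolding bc
              by (rule divide_left_mono[OF p2 p4 mult_pos_pos[OF p3 p]])
          qed
          hence "Ey s \<le> Ez s" using Ey Ez by simp
          hence "ys s \<le> zs s" using zd s1 sN by auto
          hence "zs s = 1" using y1 z01 by (metis le_antisym)
          thus ?thesis using hy hz bc gk y1 by simp
        qed
      qed
    qed
  qed
qed

theorem lemma2p6:
  fixes M :: "'a measure" and R :: "'b measure"
    and m n :: nat
    and deck :: "'a \<Rightarrow> nat list"
    and \<rho> :: "'a \<Rightarrow> 'b"
    and G :: "nat \<Rightarrow> nat list \<Rightarrow> 'b \<Rightarrow> nat"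
    and g y z :: "'a \<Rightarrow> nat \<Rightarrow> nat"
    and k t :: nat
  assumes prob: "prob_space M"
    and mpos: "0 < m" and npos: "0 < n"
    and nbig: "real n \<ge> 1200 * sqrt (real m)"
    \<comment> \<open>uniformly shuffled deck\<close>
    and deck_meas: "deck \<in> M \<rightarrow>\<^sub>M count_space UNIV"
    and deck_unif: "distr M (count_space UNIV) deck = measure_pmf (pmf_of_set (decks m n))"
    \<comment> \<open>the guessing strategy: g_t is a function of y_1..y_{t-1} and of
        extra randomness \<rho> independent of the deck\<close>
    and rho_meas: "\<rho> \<in> M \<rightarrow>\<^sub>M R"
    and rho_indep: "prob_space.indep_set M
        (sets (vimage_algebra (space M) deck (count_space UNIV)))
        (sets (vimage_algebra (space M) \<rho> R))"
    and G_meas: "\<And>s ys. G s ys \<in> R \<rightarrow>\<^sub>M count_space UNIV"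
    and G_range: "\<And>s ys r. G s ys r \<in> {1..n}"
    and g_def: "\<And>\<omega> s. 1 \<le> s \<Longrightarrow> s \<le> m * n \<Longrightarrow> g \<omega> s = G s (map (y \<omega>) [1..<s]) (\<rho> \<omega>)"
    and y_def: "\<And>\<omega> s. 1 \<le> s \<Longrightarrow> s \<le> m * n \<Longrightarrow>
                  y \<omega> s = (if deck \<omega> ! (s - 1) = g \<omega> s then 1 else 0)"
    \<comment> \<open>the known bound on E(y_t | g_{\<le>t}, y_{\<le>t-1})\<close>
    and known: "\<And>s. 1 \<le> s \<Longrightarrow> s \<le> m * n \<Longrightarrow> AE \<omega> in M.
         real (cnt_guess (g \<omega>) (g \<omega> s) s) < real (m * n) - real (\<Sum>i=1..<s. y \<omega> i) \<longrightarrow>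
         real_cond_exp M (hist M g y s) (\<lambda>\<omega>. real (y \<omega> s)) \<omega>
           \<le> (real m - real (cnt_hit (g \<omega>) (y \<omega>) (g \<omega> s) s))
             / (real (m * n) - real (cnt_guess (g \<omega>) (g \<omega> s) s) - real (\<Sum>i=1..<s. y \<omega> i))"
    \<comment> \<open>the coupled vector z on the (extended) probability space M\<close>
    and z_meas: "\<And>s. (\<lambda>\<omega>. z \<omega> s) \<in> M \<rightarrow>\<^sub>M count_space UNIV"
    and z01: "\<And>\<omega> s. z \<omega> s \<le> 1"
    and za: "AE \<omega> in M. \<forall>k'\<in>{1..n}. \<forall>s\<in>{1..m*n+1}.
         real m - max (real (m * n) - real (cnt_guess (g \<omega>) k' s) - real (Ybound m n)) 0
           \<le> real (cnt_hit (g \<omega>) (z \<omega>) k' s)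
         \<and> cnt_hit (g \<omega>) (z \<omega>) k' s \<le> m"
    and zb: "\<And>s. 1 \<le> s \<Longrightarrow> s \<le> m * n \<Longrightarrow> cond_indep_z M (m * n) g y z s"
    and zc: "\<And>s. 1 \<le> s \<Longrightarrow> s \<le> m * n \<Longrightarrow> AE \<omega> in M.
         real (cnt_guess (g \<omega>) (g \<omega> s) s) < real (m * n) - real (Ybound m n) \<longrightarrow>
         real_cond_exp M (hist M g z s) (\<lambda>\<omega>. real (z \<omega> s)) \<omega>
           = (real m - real (cnt_hit (g \<omega>) (z \<omega>) (g \<omega> s) s))
             / (real (m * n) - real (cnt_guess (g \<omega>) (g \<omega> s) s) - real (Ybound m n))"
    and zd: "\<And>s. 1 \<le> s \<Longrightarrow> s \<le> m * n \<Longrightarrow> AE \<omega> in M.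
         real_cond_exp M (hist M g y s) (\<lambda>\<omega>. real (y \<omega> s)) \<omega>
           \<le> real_cond_exp M (hist M g z s) (\<lambda>\<omega>. real (z \<omega> s)) \<omega> \<longrightarrow>
         y \<omega> s \<le> z \<omega> s"
    and k: "1 \<le> k" "k \<le> n"
    and t: "1 \<le> t" "t \<le> m * n + 1"
  shows "AE \<omega> in M. cnt_hit (g \<omega>) (y \<omega>) k t \<le> cnt_hit (g \<omega>) (z \<omega>) k t
                      \<or> (\<Sum>i=1..m*n. y \<omega> i) > Ybound m n"
proof -
  interpret P: prob_space M by (rule prob)
  have AEdeck: "AE \<omega> in M. deck \<omega> \<in> decks m n"
  proof (rule AE_distrD[OF deck_meas])
    have "AE x in measure_pmf (pmf_of_set (decks m n)). x \<in> set_pmf (pmf_of_set (decks m n))"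
      by (rule AE_measure_pmf)
    thus "AE x in distr M (count_space UNIV) deck. x \<in> decks m n"
      unfolding deck_unif using decks_nonempty decks_finite by simp
  qed
  have AEk: "AE \<omega> in M. \<forall>s\<in>{1..m*n}.
         real (cnt_guess (g \<omega>) (g \<omega> s) s) < real (m * n) - real (\<Sum>i=1..<s. y \<omega> i) \<longrightarrow>
         real_cond_exp M (hist M g y s) (\<lambda>\<omega>. real (y \<omega> s)) \<omega>
           \<le> (real m - real (cnt_hit (g \<omega>) (y \<omega>) (g \<omega> s) s))
             / (real (m * n) - real (cnt_guess (g \<omega>) (g \<omega> s) s) - real (\<Sum>i=1..<s. y \<omega> i))"
    using known by (intro AE_finite_allI) auto
  have AEc: "AE \<omega> in M. \<forall>s\<in>{1..m*n}.
         real (cnt_guess (g \<omega>) (g \<omega> s) s) < real (m * n) - real (Ybound m n) \<longrightarrow>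
         real_cond_exp M (hist M g z s) (\<lambda>\<omega>. real (z \<omega> s)) \<omega>
           = (real m - real (cnt_hit (g \<omega>) (z \<omega>) (g \<omega> s) s))
             / (real (m * n) - real (cnt_guess (g \<omega>) (g \<omega> s) s) - real (Ybound m n))"
    using zc by (intro AE_finite_allI) auto
  have AEd: "AE \<omega> in M. \<forall>s\<in>{1..m*n}.
         real_cond_exp M (hist M g y s) (\<lambda>\<omega>. real (y \<omega> s)) \<omega>
           \<le> real_cond_exp M (hist M g z s) (\<lambda>\<omega>. real (z \<omega> s)) \<omega> \<longrightarrow>
         y \<omega> s \<le> z \<omega> s"
    using zd by (intro AE_finite_allI) auto
  show ?thesis
    using AEdeck za AEk AEc AEd
  proof eventually_elim
    case (elim \<omega>)
    show ?case
    proof (cases "(\<Sum>i=1..m*n. y \<omega> i) \<le> Ybound m n")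
      case False thus ?thesis by simp
    next
      case True
      have dl: "length (deck \<omega>) = m * n" and dc: "\<forall>k\<in>{1..n}. count (mset (deck \<omega>)) k = m"
        using elim(1) by (auto simp: decks_def)
      have yd: "\<forall>s\<in>{1..m*n}. y \<omega> s = (if deck \<omega> ! (s-1) = g \<omega> s then 1 else 0)"
        using y_def by auto
      have z1: "\<forall>s. z \<omega> s \<le> 1" using z01 by auto
      have all: "\<forall>k\<in>{1..n}. cnt_hit (g \<omega>) (y \<omega>) k (Suc (t - 1)) \<le> cnt_hit (g \<omega>) (z \<omega>) k (Suc (t - 1))"
        by (rule main_pw[where Ey = "\<lambda>s. real_cond_exp M (hist M g y s) (\<lambda>\<omega>. real (y \<omega> s)) \<omega>"
              and Ez = "\<lambda>s. real_cond_exp M (hist M g z s) (\<lambda>\<omega>. real (z \<omega> s)) \<omega>",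
              OF yd dl dc elim(2) elim(3) elim(4) elim(5) z1 True]) (use t in simp)
      have "Suc (t - 1) = t" using t by simp
      thus ?thesis using all k by auto
    qed
  qed
qed

end
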